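(* Let $X_0=\{n^2:n\in\mathbb{N}\}$ with the metric $d(x,y)=|x-y|$. If $\varphi$ is a state on $\ell_\infty(X_0)$ such that $\varphi$ vanishes on $c_0(X_0)$, then $\varphi\circ E$ is a $(\sigma_h,\beta)$-KMS state on $\mathrm{C}^*_u(X_0)$ for every map $h\colon X_0\to\mathbb{R}$ and every $\beta\in\mathbb{R}$, where $E\colon\mathrm{C}^*_u(X_0)\to\ell_\infty(X_0)$ is the canonical conditional expectation.
   Context: $\mathrm{C}^*_u(X_0)$ is the norm closure of the $^*$-algebra of operators $a$ on $\ell_2(X_0)$ with $\sup\{d(x,y):a_{x,y}\neq0\}<\infty$, $a_{x,y}=\langle a\delta_y,\delta_x\rangle$. $\ell_\infty(X_0)$ is identified with the diagonal operators and $c_0(X_0)$ with the compact diagonal operators; $E$ keeps only the diagonal entries. (Every map $h\colon X_0\to\mathbb{R}$ is coarse.) $\sigma_{h,t}(a)=e^{it\bar h}ae^{-it\bar h}$, $e^{it\bar h}\delta_x=e^{ith(x)}\delta_x$. A state $\varphi$ is $(\sigma_h,\beta)$-KMS if $\varphi(a\sigma_{h,i\beta}(b))=\varphi(ba)$ for all $a$ and all analytic $b$ (those for which $t\mapsto\sigma_{h,t}(b)$ extends to an entire function). *)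

theory Defs
  imports "HOL-Analysis.Analysis"
begin

(* X_0 = {n^2 : n in N}; the point n^2 is indexed by n :: nat.
   Operators on l2(X_0) are represented by their matrices a x y = <a delta_y, delta_x>. *)

type_synonym mat = "nat \<Rightarrow> nat \<Rightarrow> complex"

definition dX0 :: "nat \<Rightarrow> nat \<Rightarrow> real" where
  "dX0 m n = \<bar>real (m^2) - real (n^2)\<bar>"

(* the matrix a defines a bounded operator on l2 with norm at most C *)
definition bounded_by :: "mat \<Rightarrow> real \<Rightarrow> bool" where
  "bounded_by a C \<longleftrightarrow> 0 \<le> C \<and>
     (\<forall>F G. finite F \<longrightarrow> finite G \<longrightarrow> (\<forall>v::nat \<Rightarrow> complex.
        (\<Sum>x\<in>G. (cmod (\<Sum>y\<in>F. a x y * v y))^2) \<le> C^2 * (\<Sum>y\<in>F. (cmod (v y))^2)))"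

definition bdd_op :: "mat \<Rightarrow> bool" where
  "bdd_op a \<longleftrightarrow> (\<exists>C. bounded_by a C)"

definition opnorm :: "mat \<Rightarrow> real" where
  "opnorm a = Inf {C. bounded_by a C}"

definition madd :: "mat \<Rightarrow> mat \<Rightarrow> mat" where
  "madd a b = (\<lambda>x y. a x y + b x y)"

definition mdiff :: "mat \<Rightarrow> mat \<Rightarrow> mat" where
  "mdiff a b = (\<lambda>x y. a x y - b x y)"

definition mscale :: "complex \<Rightarrow> mat \<Rightarrow> mat" where
  "mscale c a = (\<lambda>x y. c * a x y)"

definition mmul :: "mat \<Rightarrow> mat \<Rightarrow> mat" where
  "mmul a b = (\<lambda>x z. \<Sum>\<^sub>\<infinity>y. a x y * b y z)"

definition madj :: "mat \<Rightarrow> mat" where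
  "madj a = (\<lambda>x y. cnj (a y x))"

definition mone :: mat where
  "mone = (\<lambda>x y. if x = y then 1 else 0)"

definition finite_prop :: "mat \<Rightarrow> bool" where
  "finite_prop a \<longleftrightarrow> (\<exists>R. \<forall>x y. a x y \<noteq> 0 \<longrightarrow> dX0 x y \<le> R)"

(* uniform Roe algebra: norm closure of the bounded finite-propagation operators *)
definition Cu :: "mat set" where
  "Cu = {a. bdd_op a \<and> (\<forall>e>0. \<exists>b. bdd_op b \<and> finite_prop b \<and> opnorm (mdiff a b) < e)}"

definition linf :: "(nat \<Rightarrow> complex) set" where
  "linf = {f. bounded (range f)}"

definition c0 :: "(nat \<Rightarrow> complex) set" where
  "c0 = {f. f \<longlonglongrightarrow> 0}"

definition linf_state :: "((nat \<Rightarrow> complex) \<Rightarrow> complex) \<Rightarrow> bool" where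
  "linf_state \<phi> \<longleftrightarrow>
     (\<forall>f\<in>linf. \<forall>g\<in>linf. \<phi> (\<lambda>n. f n + g n) = \<phi> f + \<phi> g) \<and>
     (\<forall>c. \<forall>f\<in>linf. \<phi> (\<lambda>n. c * f n) = c * \<phi> f) \<and>
     (\<forall>f\<in>linf. Im (\<phi> (\<lambda>n. cnj (f n) * f n)) = 0 \<and> Re (\<phi> (\<lambda>n. cnj (f n) * f n)) \<ge> 0) \<and>
     \<phi> (\<lambda>n. 1) = 1"

definition condexp :: "mat \<Rightarrow> (nat \<Rightarrow> complex)" where
  "condexp a = (\<lambda>n. a n n)"

definition Cu_state :: "(mat \<Rightarrow> complex) \<Rightarrow> bool" where
  "Cu_state \<psi> \<longleftrightarrow>
     (\<forall>a\<in>Cu. \<forall>b\<in>Cu. \<psi> (madd a b) = \<psi> a + \<psi> b) \<and>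
     (\<forall>c. \<forall>a\<in>Cu. \<psi> (mscale c a) = c * \<psi> a) \<and>
     (\<forall>a\<in>Cu. Im (\<psi> (mmul (madj a) a)) = 0 \<and> Re (\<psi> (mmul (madj a) a)) \<ge> 0) \<and>
     \<psi> mone = 1"

(* sigma_{h,t}(a) = e^{it h} a e^{-it h}, t real *)
definition sigma :: "(nat \<Rightarrow> real) \<Rightarrow> real \<Rightarrow> mat \<Rightarrow> mat" where
  "sigma h t a = (\<lambda>x y. exp (\<i> * of_real t * of_real (h x)) * a x y * exp (- \<i> * of_real t * of_real (h y)))"

(* F is an entire (norm-holomorphic, C*_u-valued) extension of t \<mapsto> sigma_{h,t}(b) *)
definition entire_ext :: "(nat \<Rightarrow> real) \<Rightarrow> mat \<Rightarrow> (complex \<Rightarrow> mat) \<Rightarrow> bool" where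
  "entire_ext h b F \<longleftrightarrow>
     (\<forall>t::real. F (of_real t) = sigma h t b) \<and> (\<forall>z. F z \<in> Cu) \<and>
     (\<forall>z. \<exists>D. bdd_op D \<and>
        ((\<lambda>w. opnorm (mdiff (mscale (1 / w) (mdiff (F (z + w)) (F z))) D)) \<longlongrightarrow> 0) (at 0))"

(* (sigma_h, beta)-KMS state on C*_u(X_0); sigma_{h,i beta}(b) = F(i beta) *)
definition KMS_state :: "(nat \<Rightarrow> real) \<Rightarrow> real \<Rightarrow> (mat \<Rightarrow> complex) \<Rightarrow> bool" where
  "KMS_state h \<beta> \<psi> \<longleftrightarrow> Cu_state \<psi> \<and>
     (\<forall>a\<in>Cu. \<forall>b\<in>Cu. \<forall>F. entire_ext h b F \<longrightarrow>
        \<psi> (mmul a (F (\<i> * of_real \<beta>))) = \<psi> (mmul b a))"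

end

theory Submission
  imports Defs "HOL-Complex_Analysis.Complex_Analysis"
begin

lemma bb_apply:
  assumes "bounded_by M C" "finite F" "finite G"
  shows "(\<Sum>x\<in>G. (cmod (\<Sum>y\<in>F. M x y * v y))^2) \<le> C^2 * (\<Sum>y\<in>F. (cmod (v y))^2)"
  using assms unfolding bounded_by_def by blast

lemma bb_nonneg: "bounded_by M C \<Longrightarrow> 0 \<le> C"
  unfolding bounded_by_def by blast

lemma bb_col:
  assumes "bounded_by M C" "finite G"
  shows "(\<Sum>x\<in>G. (cmod (M x n))^2) \<le> C^2"
proof -
  have "(\<Sum>x\<in>G. (cmod (\<Sum>y\<in>{n}. M x y * (\<lambda>_. 1) y))^2) \<le> C^2 * (\<Sum>y\<in>{n}. (cmod ((\<lambda>_. (1::complex)) y))^2)"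
    using bb_apply[OF assms(1) _ assms(2), of "{n}" "\<lambda>_. 1"] by simp
  then show ?thesis by simp
qed

lemma bb_entry:
  assumes "bounded_by M C"
  shows "cmod (M x y) \<le> C"
proof -
  have "(\<Sum>x'\<in>{x}. (cmod (M x' y))^2) \<le> C^2" by (rule bb_col[OF assms]) simp
  then have "(cmod (M x y))^2 \<le> C^2" by simp
  moreover have "0 \<le> C" using assms bb_nonneg by blast
  ultimately show ?thesis using power2_le_imp_le by blast
qed

lemma bb_row:
  assumes "bounded_by M C" "finite F"
  shows "(\<Sum>y\<in>F. (cmod (M n y))^2) \<le> C^2"
proof -
  define S where "S = (\<Sum>y\<in>F. (cmod (M n y))^2)"
  have h1: "(\<Sum>x\<in>{n}. (cmod (\<Sum>y\<in>F. M x y * cnj (M n y)))^2) \<le> C^2 * (\<Sum>y\<in>F. (cmod (cnj (M n y)))^2)"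
    by (rule bb_apply[OF assms(1) assms(2)]) simp
  have e: "(\<Sum>y\<in>F. M n y * cnj (M n y)) = of_real S"
    unfolding S_def of_real_sum by (rule sum.cong[OF refl]) (metis complex_norm_square)
  have S0: "S \<ge> 0" unfolding S_def by (simp add: sum_nonneg)
  from h1 have "(cmod (\<Sum>y\<in>F. M n y * cnj (M n y)))^2 \<le> C^2 * S" by (simp add: S_def)
  then have "(cmod (of_real S))^2 \<le> C^2 * S" by (simp only: e)
  with S0 have "S^2 \<le> C^2 * S" by simp
  moreover have "S \<ge> 0" unfolding S_def by (simp add: sum_nonneg)
  have "S \<le> C^2"
  proof (cases "S = 0")
    case True then show ?thesis by simp
  next
    case False
    with \<open>S \<ge> 0\<close> have "S > 0" by simp
    with \<open>S^2 \<le> C^2 * S\<close> have "S * S \<le> C^2 * S" by (simp add: power2_eq_square)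
    with \<open>S > 0\<close> show ?thesis by simp
  qed
  then show ?thesis by (simp add: S_def)
qed

lemma bb_diff:
  assumes "bounded_by a A" "bounded_by b B"
  shows "bounded_by (mdiff a b) (sqrt (2*A^2 + 2*B^2))"
  unfolding bounded_by_def
proof (intro conjI allI impI)
  show "0 \<le> sqrt (2*A^2 + 2*B^2)" by simp
  fix F G :: "nat set" and v :: "nat \<Rightarrow> complex"
  assume F: "finite F" and G: "finite G"
  define V where "V = (\<Sum>y\<in>F. (cmod (v y))^2)"
  define p where "p x = (\<Sum>y\<in>F. a x y * v y)" for x
  define q where "q x = (\<Sum>y\<in>F. b x y * v y)" for x
  have pa: "(\<Sum>x\<in>G. (cmod (p x))^2) \<le> A^2 * V" using bb_apply[OF assms(1) F G, of v] unfolding p_def V_def by simp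
  have qb: "(\<Sum>x\<in>G. (cmod (q x))^2) \<le> B^2 * V" using bb_apply[OF assms(2) F G, of v] unfolding q_def V_def by simp
  have eq: "(\<Sum>y\<in>F. mdiff a b x y * v y) = p x - q x" for x
    unfolding p_def q_def mdiff_def by (simp add: sum_subtractf algebra_simps)
  have pt: "(cmod (p x - q x))^2 \<le> 2 * (cmod (p x))^2 + 2 * (cmod (q x))^2" for x
  proof -
    have "cmod (p x - q x) \<le> cmod (p x) + cmod (q x)" by (rule norm_triangle_ineq4)
    then have "(cmod (p x - q x))^2 \<le> (cmod (p x) + cmod (q x))^2" by (simp add: power_mono)
    also have "\<dots> \<le> 2 * (cmod (p x))^2 + 2 * (cmod (q x))^2"
      using zero_le_power2[of "cmod (p x) - cmod (q x)"] unfolding power2_sum power2_diff by linarith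
    finally show ?thesis .
  qed
  have "(\<Sum>x\<in>G. (cmod (\<Sum>y\<in>F. mdiff a b x y * v y))^2) \<le> (\<Sum>x\<in>G. 2 * (cmod (p x))^2 + 2 * (cmod (q x))^2)"
    unfolding eq by (rule sum_mono) (rule pt)
  also have "\<dots> = 2 * (\<Sum>x\<in>G. (cmod (p x))^2) + 2 * (\<Sum>x\<in>G. (cmod (q x))^2)"
    by (simp add: sum.distrib sum_distrib_left)
  also have "\<dots> \<le> 2 * (A^2 * V) + 2 * (B^2 * V)" using pa qb by linarith
  also have "\<dots> = (sqrt (2*A^2 + 2*B^2))^2 * V" by (simp add: algebra_simps)
  finally show "(\<Sum>x\<in>G. (cmod (\<Sum>y\<in>F. mdiff a b x y * v y))^2) \<le> (sqrt (2*A^2 + 2*B^2))^2 * (\<Sum>y\<in>F. (cmod (v y))^2)"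
    unfolding V_def .
qed

lemma bb_scale:
  assumes "bounded_by a A"
  shows "bounded_by (mscale c a) (cmod c * A)"
  unfolding bounded_by_def
proof (intro conjI allI impI)
  show "0 \<le> cmod c * A" using assms bb_nonneg by simp
  fix F G :: "nat set" and v :: "nat \<Rightarrow> complex"
  assume F: "finite F" and G: "finite G"
  have h: "(\<Sum>x\<in>G. (cmod (\<Sum>y\<in>F. a x y * v y))^2) \<le> A^2 * (\<Sum>y\<in>F. (cmod (v y))^2)"
    using bb_apply[OF assms F G, of v] by simp
  have "(\<Sum>x\<in>G. (cmod (\<Sum>y\<in>F. mscale c a x y * v y))^2) = (cmod c)^2 * (\<Sum>x\<in>G. (cmod (\<Sum>y\<in>F. a x y * v y))^2)"
    unfolding mscale_def sum_distrib_left
    by (rule sum.cong[OF refl]) (simp add: sum_distrib_left[symmetric] mult.assoc norm_mult power_mult_distrib)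
  also have "\<dots> \<le> (cmod c)^2 * (A^2 * (\<Sum>y\<in>F. (cmod (v y))^2))"
    using h by (simp add: mult_left_mono)
  finally show "(\<Sum>x\<in>G. (cmod (\<Sum>y\<in>F. mscale c a x y * v y))^2) \<le> (cmod c * A)^2 * (\<Sum>y\<in>F. (cmod (v y))^2)"
    by (simp add: power_mult_distrib mult.assoc)
qed

lemma bdd_diff: "bdd_op a \<Longrightarrow> bdd_op b \<Longrightarrow> bdd_op (mdiff a b)"
  unfolding bdd_op_def using bb_diff by blast

lemma bdd_scale: "bdd_op a \<Longrightarrow> bdd_op (mscale c a)"
  unfolding bdd_op_def using bb_scale by blast

lemma opnorm_entry:
  assumes "bdd_op M"
  shows "cmod (M x y) \<le> opnorm M"
  unfolding opnorm_def
  using assms unfolding bdd_op_def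
  by (intro cInf_greatest) (auto intro: bb_entry)

lemma opnorm_less:
  assumes "bdd_op M" "opnorm M < e"
  obtains C where "bounded_by M C" "C < e"
  using assms cInf_lessD[of "{C. bounded_by M C}" e] unfolding opnorm_def bdd_op_def by auto


lemma dX0_sym: "dX0 x y = dX0 y x"
  unfolding dX0_def by simp

lemma dX0_far:
  assumes "y \<noteq> n"
  shows "real n \<le> dX0 n y"
proof -
  have d1: "1 \<le> \<bar>real n - real y\<bar>" using assms by (cases "y < n") auto
  have "dX0 n y = \<bar>real n - real y\<bar> * (real n + real y)"
  proof -
    have "real (n^2) - real (y^2) = (real n - real y) * (real n + real y)"
      by (simp add: power2_eq_square algebra_simps)
    then show ?thesis unfolding dX0_def by (simp add: abs_mult)
  qed
  also have "\<dots> \<ge> 1 * (real n + real y)"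
    by (rule mult_right_mono[OF d1]) simp
  finally show ?thesis by simp
qed

lemma Cu_bdd: "a \<in> Cu \<Longrightarrow> bdd_op a"
  unfolding Cu_def by blast

lemma offdiag_small:
  assumes "a \<in> Cu" "e > 0"
  shows "\<exists>N. \<forall>n\<ge>N. \<forall>F. finite F \<longrightarrow> n \<notin> F \<longrightarrow>
           (\<Sum>y\<in>F. (cmod (a n y))^2) \<le> e \<and> (\<Sum>y\<in>F. (cmod (a y n))^2) \<le> e"
proof -
  have "sqrt e > 0" using assms by simp
  then obtain b where b: "bdd_op b" "finite_prop b" "opnorm (mdiff a b) < sqrt e"
    using assms(1) unfolding Cu_def by blast
  have bd: "bdd_op (mdiff a b)" using bdd_diff[OF Cu_bdd[OF assms(1)] b(1)] .
  obtain C where C: "bounded_by (mdiff a b) C" "C < sqrt e"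
    using opnorm_less[OF bd b(3)] by blast
  have C0: "0 \<le> C" using bb_nonneg[OF C(1)] .
  have C2: "C^2 \<le> e" using C C0 assms(2)
    by (metis less_eq_real_def power_mono real_sqrt_pow2)
  obtain R where R: "\<And>x y. b x y \<noteq> 0 \<Longrightarrow> dX0 x y \<le> R"
    using b(2) unfolding finite_prop_def by blast
  define N where "N = nat \<lceil>R\<rceil> + 1"
  have "\<forall>n\<ge>N. \<forall>F. finite F \<longrightarrow> n \<notin> F \<longrightarrow>
           (\<Sum>y\<in>F. (cmod (a n y))^2) \<le> e \<and> (\<Sum>y\<in>F. (cmod (a y n))^2) \<le> e"
  proof (intro allI impI)
    fix n F assume n: "N \<le> n" and F: "finite F" and nF: "n \<notin> F"
    have Rn: "R < real n" using n unfolding N_def by linarith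
    have z1: "b n y = 0" if "y \<in> F" for y
    proof (rule ccontr)
      assume "b n y \<noteq> 0"
      then have "dX0 n y \<le> R" by (rule R)
      moreover have "real n \<le> dX0 n y" using dX0_far[of y n] that nF by auto
      ultimately show False using Rn by linarith
    qed
    have z2: "b y n = 0" if "y \<in> F" for y
    proof (rule ccontr)
      assume "b y n \<noteq> 0"
      then have "dX0 y n \<le> R" by (rule R)
      moreover have "real n \<le> dX0 n y" using dX0_far[of y n] that nF by auto
      ultimately show False using Rn dX0_sym[of y n] by linarith
    qed
    have "(\<Sum>y\<in>F. (cmod (a n y))^2) = (\<Sum>y\<in>F. (cmod (mdiff a b n y))^2)"
      by (rule sum.cong[OF refl]) (simp add: mdiff_def z1)
    also have "\<dots> \<le> C^2" by (rule bb_row[OF C(1) F])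
    finally have r1: "(\<Sum>y\<in>F. (cmod (a n y))^2) \<le> e" using C2 by linarith
    have "(\<Sum>y\<in>F. (cmod (a y n))^2) = (\<Sum>y\<in>F. (cmod (mdiff a b y n))^2)"
      by (rule sum.cong[OF refl]) (simp add: mdiff_def z2)
    also have "\<dots> \<le> C^2" by (rule bb_col[OF C(1) F])
    finally have r2: "(\<Sum>y\<in>F. (cmod (a y n))^2) \<le> e" using C2 by linarith
    show "(\<Sum>y\<in>F. (cmod (a n y))^2) \<le> e \<and> (\<Sum>y\<in>F. (cmod (a y n))^2) \<le> e"
      using r1 r2 by blast
  qed
  then show ?thesis by blast
qed

lemma prod_sum_bound:
  fixes p q :: "nat \<Rightarrow> complex"
  assumes hp: "\<And>F. finite F \<Longrightarrow> F \<subseteq> A \<Longrightarrow> (\<Sum>y\<in>F. (cmod (p y))^2) \<le> K"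
    and hq: "\<And>F. finite F \<Longrightarrow> F \<subseteq> A \<Longrightarrow> (\<Sum>y\<in>F. (cmod (q y))^2) \<le> K"
  shows "(\<lambda>y. p y * q y) summable_on A" "cmod (infsum (\<lambda>y. p y * q y) A) \<le> K"
proof -
  have fs: "(\<Sum>y\<in>F. norm (p y * q y)) \<le> K" if "finite F" "F \<subseteq> A" for F
  proof -
    have pt: "norm (p y * q y) \<le> ((cmod (p y))^2 + (cmod (q y))^2) / 2" for y
    proof -
      have "0 \<le> (cmod (p y) - cmod (q y))^2" by simp
      then show ?thesis unfolding norm_mult power2_diff by (simp add: field_simps)
    qed
    have "(\<Sum>y\<in>F. norm (p y * q y)) \<le> (\<Sum>y\<in>F. ((cmod (p y))^2 + (cmod (q y))^2) / 2)"
      by (rule sum_mono) (rule pt)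
    also have "\<dots> = ((\<Sum>y\<in>F. (cmod (p y))^2) + (\<Sum>y\<in>F. (cmod (q y))^2)) / 2"
      by (simp only: sum_divide_distrib[symmetric] sum.distrib)
    also have "\<dots> \<le> K" using hp[OF that] hq[OF that] by (simp add: field_simps)
    finally show ?thesis .
  qed
  have ns: "(\<lambda>y. norm (p y * q y)) summable_on A"
    by (rule nonneg_bdd_above_summable_on) (auto intro!: bdd_aboveI2 fs)
  then show "(\<lambda>y. p y * q y) summable_on A" by (rule abs_summable_summable)
  have "cmod (infsum (\<lambda>y. p y * q y) A) \<le> infsum (\<lambda>y. norm (p y * q y)) A"
    by (rule norm_infsum_bound[OF ns])
  also have "\<dots> \<le> K" by (rule infsum_le_finite_sums[OF ns fs])
  finally show "cmod (infsum (\<lambda>y. p y * q y) A) \<le> K" .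
qed


lemma diag_c0:
  assumes a: "a \<in> Cu" and c: "c \<in> Cu"
  shows "(\<lambda>n. mmul a c n n - a n n * c n n) \<in> c0"
  unfolding c0_def mem_Collect_eq
proof (rule LIMSEQ_I)
  fix r :: real assume r: "0 < r"
  then have r2: "r / 2 > 0" by simp
  obtain Na where Na: "\<forall>n\<ge>Na. \<forall>F. finite F \<longrightarrow> n \<notin> F \<longrightarrow>
           (\<Sum>y\<in>F. (cmod (a n y))^2) \<le> r/2 \<and> (\<Sum>y\<in>F. (cmod (a y n))^2) \<le> r/2"
    using offdiag_small[OF a r2] by blast
  obtain Nc where Nc: "\<forall>n\<ge>Nc. \<forall>F. finite F \<longrightarrow> n \<notin> F \<longrightarrow>
           (\<Sum>y\<in>F. (cmod (c n y))^2) \<le> r/2 \<and> (\<Sum>y\<in>F. (cmod (c y n))^2) \<le> r/2"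
    using offdiag_small[OF c r2] by blast
  have "norm (mmul a c n n - a n n * c n n - 0) < r" if n: "max Na Nc \<le> n" for n
  proof -
    have hp: "(\<Sum>y\<in>F. (cmod (a n y))^2) \<le> r/2" if "finite F" "F \<subseteq> - {n}" for F
      using Na n that by auto
    have hq: "(\<Sum>y\<in>F. (cmod (c y n))^2) \<le> r/2" if "finite F" "F \<subseteq> - {n}" for F
      using Nc n that by auto
    note pb = prod_sum_bound[of "- {n}" "\<lambda>y. a n y" "r/2" "\<lambda>y. c y n", OF hp hq]
    have "mmul a c n n = infsum (\<lambda>y. a n y * c y n) (insert n (- {n}))"
    proof -
      have "insert n (- {n}) = UNIV" by auto
      then show ?thesis unfolding mmul_def by simp
    qed
    also have "\<dots> = a n n * c n n + infsum (\<lambda>y. a n y * c y n) (- {n})"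
      using infsum_insert[OF pb(1), of n] by simp
    finally have "mmul a c n n - a n n * c n n - 0 = infsum (\<lambda>y. a n y * c y n) (- {n})" by simp
    then show ?thesis using pb(2) r by simp
  qed
  then show "\<exists>no. \<forall>n\<ge>no. norm (mmul a c n n - a n n * c n n - 0) < r" by blast
qed

lemma linfI: "(\<And>n. norm (f n) \<le> B) \<Longrightarrow> f \<in> linf"
  unfolding linf_def bounded_iff by auto

lemma linf_bound: "f \<in> linf \<Longrightarrow> \<exists>B. \<forall>n. norm (f n) \<le> B"
  unfolding linf_def bounded_iff by auto

lemma c0_linf: "f \<in> c0 \<Longrightarrow> f \<in> linf"
  unfolding c0_def linf_def using convergent_imp_bounded by blast

lemma diag_linf: "a \<in> Cu \<Longrightarrow> (\<lambda>n. a n n) \<in> linf"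
proof -
  assume "a \<in> Cu"
  then obtain C where "bounded_by a C" using Cu_bdd bdd_op_def by blast
  then show ?thesis by (intro linfI[of _ C]) (rule bb_entry)
qed

lemma linf_mult: "f \<in> linf \<Longrightarrow> g \<in> linf \<Longrightarrow> (\<lambda>n. f n * g n) \<in> linf"
proof -
  assume "f \<in> linf" "g \<in> linf"
  then obtain A B where A: "\<And>n. norm (f n) \<le> A" and B: "\<And>n. norm (g n) \<le> B"
    using linf_bound by blast
  have "norm (f n * g n) \<le> A * B" for n
    unfolding norm_mult by (rule mult_mono[OF A B]) (auto intro: order_trans[OF norm_ge_zero A])
  then show ?thesis by (rule linfI)
qed

lemma phi_eq:
  assumes st: "linf_state \<phi>" and z: "\<forall>f\<in>c0. \<phi> f = 0"
    and g: "g \<in> linf" and fg: "(\<lambda>n. f n - g n) \<in> c0"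
  shows "\<phi> f = \<phi> g"
proof -
  have add: "\<forall>f\<in>linf. \<forall>g\<in>linf. \<phi> (\<lambda>n. f n + g n) = \<phi> f + \<phi> g"
    using st unfolding linf_state_def by blast
  have "f = (\<lambda>n. g n + (f n - g n))" by simp
  then have "\<phi> f = \<phi> (\<lambda>n. g n + (f n - g n))" by simp
  also have "\<dots> = \<phi> g + \<phi> (\<lambda>n. f n - g n)"
    using add[rule_format, OF g c0_linf[OF fg]] by simp
  also have "\<dots> = \<phi> g" using z fg by simp
  finally show ?thesis .
qed

lemma entire_diag:
  assumes E: "entire_ext h b F"
  shows "F w n n = b n n"
proof -
  define g where "g z = F z n n" for z
  have FCu: "\<And>z. F z \<in> Cu" using E unfolding entire_ext_def by blast
  have deriv: "\<exists>D'. (g has_field_derivative D') (at z)" for z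
  proof -
    obtain D where D: "bdd_op D"
      "((\<lambda>w. opnorm (mdiff (mscale (1 / w) (mdiff (F (z + w)) (F z))) D)) \<longlongrightarrow> 0) (at 0)"
      using E unfolding entire_ext_def by blast
    define M where "M w = mdiff (mscale (1 / w) (mdiff (F (z + w)) (F z))) D" for w
    have bM: "bdd_op (M w)" for w
      unfolding M_def by (intro bdd_diff bdd_scale D(1) Cu_bdd FCu)
    have "((\<lambda>w. M w n n) \<longlongrightarrow> 0) (at 0)"
    proof (rule tendsto_0_le[where K=1])
      show "((\<lambda>w. opnorm (M w)) \<longlongrightarrow> 0) (at 0)" using D(2) unfolding M_def .
      show "\<forall>\<^sub>F w in at 0. norm (M w n n) \<le> norm (opnorm (M w)) * 1"
        using opnorm_entry[OF bM] by (intro always_eventually allI) (metis order_trans abs_ge_self mult_1_right real_norm_def)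
    qed
    moreover have "M w n n = (g (z + w) - g z) / w - D n n" for w
      unfolding M_def g_def mdiff_def mscale_def by (simp add: divide_inverse mult.commute)
    ultimately have "((\<lambda>w. (g (z + w) - g z) / w - D n n) \<longlongrightarrow> 0) (at 0)" by simp
    then have "((\<lambda>w. (g (z + w) - g z) / w) \<longlongrightarrow> D n n) (at 0)"
      using Lim_null by blast
    then have "(g has_field_derivative D n n) (at z)" unfolding DERIV_def .
    then show ?thesis by blast
  qed
  have "g holomorphic_on UNIV"
    unfolding holomorphic_on_def field_differentiable_def
    using deriv by blast
  then have hol: "(\<lambda>z. g z - b n n) holomorphic_on UNIV"
    by (rule holomorphic_on_diff[OF _ holomorphic_on_const])
  have sig: "sigma h t b n n = b n n" for t
  proof -
    have e1: "exp (\<i> * of_real t * of_real (h n)) * exp (- \<i> * of_real t * of_real (h n)) = 1"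
    proof -
      have "- \<i> * of_real t * of_real (h n) = - (\<i> * of_real t * of_real (h n))" by simp
      then show ?thesis by (simp only: exp_minus_inverse)
    qed
    have "sigma h t b n n = exp (\<i> * of_real t * of_real (h n)) * b n n * exp (- \<i> * of_real t * of_real (h n))"
      by (simp only: sigma_def)
    also have "\<dots> = b n n * (exp (\<i> * of_real t * of_real (h n)) * exp (- \<i> * of_real t * of_real (h n)))"
      by (metis mult.commute mult.assoc)
    also have "\<dots> = b n n" by (simp only: e1 mult_1_right)
    finally show ?thesis .
  qed
  have real0: "g z - b n n = 0" if zR: "z \<in> \<real>" for z
  proof -
    obtain t where t: "z = of_real t" by (rule Reals_cases[OF zR])
    have "F (of_real t) = sigma h t b" using E unfolding entire_ext_def by (simp only:)
    then have "g z = sigma h t b n n" unfolding g_def t by (simp only:)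
    then show ?thesis using sig by simp
  qed
  have lim: "0 islimpt (\<real> :: complex set)"
    unfolding islimpt_approachable
  proof (intro allI impI)
    fix e :: real assume "0 < e"
    show "\<exists>x'\<in>(\<real>::complex set). x' \<noteq> 0 \<and> dist x' 0 < e"
    proof (rule bexI[where x="complex_of_real (e/2)"])
      show "complex_of_real (e/2) \<in> \<real>" by simp
      show "complex_of_real (e/2) \<noteq> 0 \<and> dist (complex_of_real (e/2)) 0 < e"
        using \<open>0 < e\<close> by (simp add: dist_norm)
    qed
  qed
  have "g w - b n n = 0"
    by (rule analytic_continuation[OF hol open_UNIV connected_UNIV subset_UNIV UNIV_I lim real0 UNIV_I])
  then show ?thesis unfolding g_def by simp
qed


lemma condexp_linf: "a \<in> Cu \<Longrightarrow> condexp a \<in> linf"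
  unfolding condexp_def by (rule diag_linf)

lemma pos_part:
  assumes a: "a \<in> Cu"
  shows "\<exists>f\<in>linf. condexp (mmul (madj a) a) = (\<lambda>n. cnj (f n) * f n)"
proof -
  obtain C where C: "bounded_by a C" using Cu_bdd[OF a] bdd_op_def by blast
  define r where "r n y = (cmod (a y n))^2" for n y
  have fs: "sum (r n) F \<le> C^2" if "finite F" for n F
    unfolding r_def by (rule bb_col[OF C that])
  have sr: "r n summable_on UNIV" for n
  proof (rule nonneg_bdd_above_summable_on)
    show "\<And>x. x \<in> UNIV \<Longrightarrow> 0 \<le> r n x" by (simp add: r_def)
    show "bdd_above (sum (r n) ` {F. F \<subseteq> UNIV \<and> finite F})"
      by (rule bdd_aboveI2[where M="C^2"]) (use fs in auto)
  qed
  define S where "S n = infsum (r n) UNIV" for n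
  have S0: "S n \<ge> 0" for n unfolding S_def by (rule infsum_nonneg) (simp add: r_def)
  have SC: "S n \<le> C^2" for n unfolding S_def by (rule infsum_le_finite_sums[OF sr]) (rule fs)
  have hs: "((\<lambda>y. complex_of_real (r n y)) has_sum complex_of_real (S n)) UNIV" for n
    unfolding has_sum_of_real_iff S_def using sr has_sum_infsum by blast
  have eq: "condexp (mmul (madj a) a) n = complex_of_real (S n)" for n
  proof -
    have "condexp (mmul (madj a) a) n = infsum (\<lambda>y. complex_of_real (r n y)) UNIV"
      unfolding condexp_def mmul_def madj_def r_def
      by (rule infsum_cong) (metis complex_norm_square mult.commute)
    also have "\<dots> = complex_of_real (S n)" using hs infsumI by blast
    finally show ?thesis .
  qed
  define f where "f n = complex_of_real (sqrt (S n))" for n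
  have "f \<in> linf"
  proof (rule linfI)
    fix n
    have "sqrt (S n) \<le> sqrt (C^2)" using SC[of n] by (simp only: real_sqrt_le_iff)
    then show "norm (f n) \<le> C" using bb_nonneg[OF C] S0[of n] unfolding f_def by simp
  qed
  moreover have "condexp (mmul (madj a) a) = (\<lambda>n. cnj (f n) * f n)"
  proof
    fix n
    have "cnj (f n) * f n = complex_of_real (sqrt (S n) * sqrt (S n))" unfolding f_def by (simp only: complex_cnj_complex_of_real of_real_mult)
    also have "\<dots> = complex_of_real (S n)" using S0[of n] by simp
    finally show "condexp (mmul (madj a) a) n = cnj (f n) * f n" using eq by simp
  qed
  ultimately show ?thesis by blast
qed

theorem proposition2p9:
  fixes \<phi> :: "(nat \<Rightarrow> complex) \<Rightarrow> complex"
  assumes "linf_state \<phi>"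
    and "\<forall>f\<in>c0. \<phi> f = 0"
  shows "\<forall>(h :: nat \<Rightarrow> real) (\<beta> :: real). KMS_state h \<beta> (\<lambda>a. \<phi> (condexp a))"
proof (intro allI)
  fix h :: "nat \<Rightarrow> real" and \<beta> :: real
  have add: "\<forall>f\<in>linf. \<forall>g\<in>linf. \<phi> (\<lambda>n. f n + g n) = \<phi> f + \<phi> g"
    using assms(1) unfolding linf_state_def by blast
  have scl: "\<forall>c. \<forall>f\<in>linf. \<phi> (\<lambda>n. c * f n) = c * \<phi> f"
    using assms(1) unfolding linf_state_def by blast
  have pos: "\<forall>f\<in>linf. Im (\<phi> (\<lambda>n. cnj (f n) * f n)) = 0 \<and> Re (\<phi> (\<lambda>n. cnj (f n) * f n)) \<ge> 0"
    using assms(1) unfolding linf_state_def by blast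
  have one: "\<phi> (\<lambda>n. 1) = 1"
    using assms(1) unfolding linf_state_def by blast
  have st: "Cu_state (\<lambda>a. \<phi> (condexp a))"
    unfolding Cu_state_def
  proof (intro conjI ballI allI)
    fix a b assume a: "a \<in> Cu" and b: "b \<in> Cu"
    have "condexp (madd a b) = (\<lambda>n. condexp a n + condexp b n)"
      unfolding condexp_def madd_def by simp
    then show "\<phi> (condexp (madd a b)) = \<phi> (condexp a) + \<phi> (condexp b)"
      using add[rule_format, OF condexp_linf[OF a] condexp_linf[OF b]] by simp
  next
    fix c a assume a: "a \<in> Cu"
    have "condexp (mscale c a) = (\<lambda>n. c * condexp a n)"
      unfolding condexp_def mscale_def by simp
    then show "\<phi> (condexp (mscale c a)) = c * \<phi> (condexp a)"
      using scl[rule_format, OF condexp_linf[OF a]] by simp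
  next
    fix a assume a: "a \<in> Cu"
    obtain f where f: "f \<in> linf" "condexp (mmul (madj a) a) = (\<lambda>n. cnj (f n) * f n)"
      using pos_part[OF a] by blast
    show "Im (\<phi> (condexp (mmul (madj a) a))) = 0" using pos f by simp
  next
    fix a assume a: "a \<in> Cu"
    obtain f where f: "f \<in> linf" "condexp (mmul (madj a) a) = (\<lambda>n. cnj (f n) * f n)"
      using pos_part[OF a] by blast
    show "Re (\<phi> (condexp (mmul (madj a) a))) \<ge> 0" using pos f by simp
  next
    have "condexp mone = (\<lambda>n. 1)" unfolding condexp_def mone_def by simp
    then show "\<phi> (condexp mone) = 1" using one by simp
  qed
  have kms: "\<phi> (condexp (mmul a (F (\<i> * of_real \<beta>)))) = \<phi> (condexp (mmul b a))"
    if a: "a \<in> Cu" and b: "b \<in> Cu" and E: "entire_ext h b F" for a b F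
  proof -
    define c where "c = F (\<i> * of_real \<beta>)"
    have c: "c \<in> Cu" using E unfolding entire_ext_def c_def by blast
    have cb: "c n n = b n n" for n unfolding c_def by (rule entire_diag[OF E])
    have l1: "(\<lambda>n. a n n * c n n) \<in> linf" by (intro linf_mult diag_linf a c)
    have l2: "(\<lambda>n. b n n * a n n) \<in> linf" by (intro linf_mult diag_linf a b)
    have "\<phi> (condexp (mmul a c)) = \<phi> (\<lambda>n. a n n * c n n)"
      by (rule phi_eq[OF assms l1]) (unfold condexp_def, rule diag_c0[OF a c])
    also have "\<dots> = \<phi> (\<lambda>n. b n n * a n n)" by (simp add: cb mult.commute)
    also have "\<dots> = \<phi> (condexp (mmul b a))"
      by (rule phi_eq[OF assms l2, symmetric]) (unfold condexp_def, rule diag_c0[OF b a])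
    finally show ?thesis unfolding c_def .
  qed
  show "KMS_state h \<beta> (\<lambda>a. \<phi> (condexp a))"
    unfolding KMS_state_def using st kms by blast
qed

end
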